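(* Let $\mathcal{M}=(E,r)$ be a matroid and $D,D_1,D_2\subseteq E$ with $D_1\cap D_2=\{e\}$ and $D=D_1\cup D_2$, such that $\mathcal{M}|_D=P(\mathcal{M}|_{D_1},\mathcal{M}|_{D_2})$ is the parallel connection along $e$. (a) $D$ is a $k$-fold circuit if and only if each $D_i$ is a $k_i$-fold circuit (for some $k_1,k_2$) with $k=k_1+k_2$. (b) If $D_i$ is a $k_i$-fold circuit with principal partition $\mathcal{A}_i$ and $e\in A^i\in\mathcal{A}_i$ ($i=1,2$), then the principal partition of $D$ is $\mathcal{A}=(\mathcal{A}_1\setminus\{A^1\})\cup(\mathcal{A}_2\setminus\{A^2\})\cup\{A^1-e,\,A^2-e,\,\{e\}\}$.
   Context: $\mathcal{M}|_X$ denotes restriction. For matroids $\mathcal{M}_1,\mathcal{M}_2$ on $E_1,E_2$ with $E_1\cap E_2=\{e\}$, $e$ neither a loop nor a coloop of either, the parallel connection $P(\mathcal{M}_1,\mathcal{M}_2)$ is the matroid on $E_1\cup E_2$ whose circuits are the circuits of $\mathcal{M}_1$, the circuits of $\mathcal{M}_2$, and the sets $(C_1\cup C_2)-e$ with $C_i$ a circuit of $\mathcal{M}_i$ containing $e$, $i=1,2$. A set is cyclic if it is a union of circuits. For an integer $k\ge0$, a $k$-fold circuit is a cyclic set $D$ with $r(D)=|D|-k$. For $k\ge1$, its principal partition is the partition $\{A_1,\dots,A_\ell\}$ of $D$ such that $\{D\setminus A_i\}$ is exactly the set of $(k-1)$-fold circuits contained in $D$. *)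

theory Defs
  imports Main "HOL-Library.Disjoint_Sets"
begin

definition matroid :: "'a set \<Rightarrow> ('a set \<Rightarrow> nat) \<Rightarrow> bool" where
  "matroid E r \<longleftrightarrow> finite E
     \<and> (\<forall>X. X \<subseteq> E \<longrightarrow> r X \<le> card X)
     \<and> (\<forall>X Y. X \<subseteq> Y \<and> Y \<subseteq> E \<longrightarrow> r X \<le> r Y)
     \<and> (\<forall>X Y. X \<subseteq> E \<and> Y \<subseteq> E \<longrightarrow> r (X \<union> Y) + r (X \<inter> Y) \<le> r X + r Y)"

definition indep :: "'a set \<Rightarrow> ('a set \<Rightarrow> nat) \<Rightarrow> 'a set \<Rightarrow> bool" where
  "indep E r X \<longleftrightarrow> X \<subseteq> E \<and> r X = card X"

definition circuit :: "'a set \<Rightarrow> ('a set \<Rightarrow> nat) \<Rightarrow> 'a set \<Rightarrow> bool" where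
  "circuit E r C \<longleftrightarrow> C \<subseteq> E \<and> \<not> indep E r C \<and> (\<forall>Y. Y \<subset> C \<longrightarrow> indep E r Y)"

definition restr_circuit :: "'a set \<Rightarrow> ('a set \<Rightarrow> nat) \<Rightarrow> 'a set \<Rightarrow> 'a set \<Rightarrow> bool" where
  "restr_circuit E r X C \<longleftrightarrow> circuit E r C \<and> C \<subseteq> X"

definition is_loop_restr :: "'a set \<Rightarrow> ('a set \<Rightarrow> nat) \<Rightarrow> 'a set \<Rightarrow> 'a \<Rightarrow> bool" where
  "is_loop_restr E r X e \<longleftrightarrow> e \<in> X \<and> restr_circuit E r X {e}"

definition is_coloop_restr :: "'a set \<Rightarrow> ('a set \<Rightarrow> nat) \<Rightarrow> 'a set \<Rightarrow> 'a \<Rightarrow> bool" where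
  "is_coloop_restr E r X e \<longleftrightarrow> e \<in> X \<and> \<not> (\<exists>C. restr_circuit E r X C \<and> e \<in> C)"

text \<open>M|(D1 \<union> D2) is the parallel connection P(M|D1, M|D2) along e.\<close>
definition parallel_connection_restr ::
  "'a set \<Rightarrow> ('a set \<Rightarrow> nat) \<Rightarrow> 'a set \<Rightarrow> 'a set \<Rightarrow> 'a \<Rightarrow> bool" where
  "parallel_connection_restr E r D1 D2 e \<longleftrightarrow>
     D1 \<subseteq> E \<and> D2 \<subseteq> E \<and> D1 \<inter> D2 = {e}
     \<and> \<not> is_loop_restr E r D1 e \<and> \<not> is_coloop_restr E r D1 e
     \<and> \<not> is_loop_restr E r D2 e \<and> \<not> is_coloop_restr E r D2 e
     \<and> {C. restr_circuit E r (D1 \<union> D2) C} =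
         {C. restr_circuit E r D1 C} \<union> {C. restr_circuit E r D2 C}
         \<union> {(C1 \<union> C2) - {e} | C1 C2.
               restr_circuit E r D1 C1 \<and> e \<in> C1 \<and> restr_circuit E r D2 C2 \<and> e \<in> C2}"

definition cyclic :: "'a set \<Rightarrow> ('a set \<Rightarrow> nat) \<Rightarrow> 'a set \<Rightarrow> bool" where
  "cyclic E r D \<longleftrightarrow> (\<exists>S. (\<forall>C\<in>S. circuit E r C) \<and> \<Union>S = D)"

definition kfold_circuit :: "'a set \<Rightarrow> ('a set \<Rightarrow> nat) \<Rightarrow> nat \<Rightarrow> 'a set \<Rightarrow> bool" where
  "kfold_circuit E r k D \<longleftrightarrow> cyclic E r D \<and> r D + k = card D"

definition principal_partition :: "'a set \<Rightarrow> ('a set \<Rightarrow> nat) \<Rightarrow> 'a set \<Rightarrow> 'a set set \<Rightarrow> bool" where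
  "principal_partition E r D P \<longleftrightarrow>
     (\<exists>k. k \<ge> 1 \<and> kfold_circuit E r k D \<and> partition_on D P
        \<and> (\<lambda>A. D - A) ` P = {C. C \<subseteq> D \<and> kfold_circuit E r (k - 1) C})"

end

theory Submission
  imports Defs
begin


locale matr = fixes E :: "'a set" and r :: "'a set \<Rightarrow> nat" assumes mat: "matroid E r"
begin

lemma finE: "finite E" using mat unfolding matroid_def by blast
lemma rcard: "X \<subseteq> E \<Longrightarrow> r X \<le> card X" using mat unfolding matroid_def by blast
lemma rmono: "X \<subseteq> Y \<Longrightarrow> Y \<subseteq> E \<Longrightarrow> r X \<le> r Y" using mat unfolding matroid_def by blast
lemma submod: "X \<subseteq> E \<Longrightarrow> Y \<subseteq> E \<Longrightarrow> r (X \<union> Y) + r (X \<inter> Y) \<le> r X + r Y"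
  using mat unfolding matroid_def by blast
lemma r_empty: "r {} = 0" using rcard[of "{}"] by simp
lemma finite_sub: "X \<subseteq> E \<Longrightarrow> finite X" using finE finite_subset by blast

definition nul :: "'a set \<Rightarrow> int" where "nul X = int (card X) - int (r X)"

lemma r_diff: assumes "X \<subseteq> Y" "Y \<subseteq> E" shows "r Y \<le> r X + card (Y - X)"
proof -
  have "r (X \<union> (Y - X)) + r (X \<inter> (Y - X)) \<le> r X + r (Y - X)" using assms by (intro submod) auto
  moreover have "X \<union> (Y - X) = Y" "X \<inter> (Y - X) = {}" using assms by auto
  moreover have "r (Y - X) \<le> card (Y - X)" using assms by (intro rcard) auto
  ultimately show ?thesis using r_empty by simp
qed

lemma nullity_mono: assumes "X \<subseteq> Y" "Y \<subseteq> E" shows "nul X \<le> nul Y"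
proof -
  have "finite Y" "finite X" using assms finite_sub by auto
  hence "card (Y - X) = card Y - card X" "card X \<le> card Y" using assms by (auto simp: card_Diff_subset intro: card_mono)
  with r_diff[OF assms] show ?thesis unfolding nul_def by linarith
qed

lemma nul_ge: "X \<subseteq> E \<Longrightarrow> nul X \<ge> 0" using rcard[of X] unfolding nul_def by simp

lemma indep_subset: assumes "indep E r Y" "X \<subseteq> Y" shows "indep E r X"
proof -
  have YE: "Y \<subseteq> E" and rY: "r Y = card Y" using assms unfolding indep_def by auto
  have "nul X \<le> 0" using nullity_mono[OF assms(2) YE] rY unfolding nul_def by simp
  moreover have "r X \<le> card X" using YE assms(2) by (intro rcard) auto
  ultimately show ?thesis using YE assms(2) unfolding indep_def nul_def by auto
qed

lemma indep_empty: "indep E r {}" unfolding indep_def using r_empty by simp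

lemma dep_circuit: "X \<subseteq> E \<Longrightarrow> \<not> indep E r X \<Longrightarrow> \<exists>C. C \<subseteq> X \<and> circuit E r C"
proof (induction "card X" arbitrary: X rule: less_induct)
  case less
  show ?case
  proof (cases "\<forall>Y. Y \<subset> X \<longrightarrow> indep E r Y")
    case True
    then have "circuit E r X" using less.prems unfolding circuit_def by blast
    then show ?thesis by blast
  next
    case False
    then obtain Y where Y: "Y \<subset> X" "\<not> indep E r Y" by blast
    have "finite X" using less.prems finite_sub by blast
    then have "card Y < card X" using Y psubset_card_mono by blast
    moreover have "Y \<subseteq> E" using Y less.prems by blast
    ultimately obtain C where "C \<subseteq> Y" "circuit E r C" using less.hyps Y(2) by blast
    then show ?thesis using Y by blast
  qed
qed

lemma basis_ext: assumes J: "indep E r J" "J \<subseteq> X" and X: "X \<subseteq> E"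
  shows "\<exists>I. J \<subseteq> I \<and> I \<subseteq> X \<and> indep E r I \<and> card I = r X"
proof -
  define F where "F = {I. J \<subseteq> I \<and> I \<subseteq> X \<and> indep E r I}"
  have finX: "finite X" using X finite_sub by blast
  have "F \<subseteq> Pow X" unfolding F_def by blast
  then have finF: "finite F" using finX finite_subset by blast
  have JF: "J \<in> F" using J unfolding F_def by blast
  define m where "m = Max (card ` F)"
  have "m \<in> card ` F" unfolding m_def using finF JF by (intro Max_in) auto
  then obtain I where I: "I \<in> F" "card I = m" by blast
  have Imax: "\<forall>I'\<in>F. card I' \<le> card I" using I finF unfolding m_def by auto
  from I have II: "J \<subseteq> I" "I \<subseteq> X" "indep E r I" unfolding F_def by auto
  have rI: "r I = card I" using II(3) unfolding indep_def by simp
  have finI: "finite I" using II finX finite_subset by blast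
  have step: "r (insert x I) \<le> r I" if "x \<in> X - I" for x
  proof -
    have "\<not> indep E r (insert x I)"
    proof
      assume "indep E r (insert x I)"
      then have "insert x I \<in> F" using II that unfolding F_def by auto
      then have "card (insert x I) \<le> card I" using Imax by blast
      then show False using that finI by simp
    qed
    moreover have "insert x I \<subseteq> E" using II that X by auto
    ultimately have "r (insert x I) < card (insert x I)" using rcard[of "insert x I"] unfolding indep_def
      by fastforce
    then show ?thesis using rI finI that by simp
  qed
  have gen: "finite S \<Longrightarrow> S \<subseteq> X - I \<Longrightarrow> r (I \<union> S) \<le> r I" for S
  proof (induction S rule: finite_induct)
    case empty then show ?case by simp
  next
    case (insert x S)
    have "r ((I \<union> S) \<union> insert x I) + r ((I \<union> S) \<inter> insert x I) \<le> r (I \<union> S) + r (insert x I)"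
      using insert.prems II X by (intro submod) auto
    moreover have "(I \<union> S) \<union> insert x I = I \<union> insert x S" by auto
    moreover have "(I \<union> S) \<inter> insert x I = I" using insert.hyps(2) insert.prems by auto
    moreover have "r (insert x I) \<le> r I" using step insert.prems by auto
    ultimately show ?case using insert.IH insert.prems by simp
  qed
  have "I \<union> (X - I) = X" using II by auto
  then have "r X \<le> r I" using gen[of "X - I"] finX by simp
  moreover have "r I \<le> r X" using II X rmono by blast
  ultimately show ?thesis using II rI by (intro exI[of _ I]) auto
qed

lemma circuit_E: "circuit E r C \<Longrightarrow> C \<subseteq> E" unfolding circuit_def by blast

lemma cyclic_iff: "cyclic E r D \<longleftrightarrow> (\<forall>x\<in>D. \<exists>C. circuit E r C \<and> C \<subseteq> D \<and> x \<in> C)"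
  unfolding cyclic_def
  apply (rule iffI)
   apply blast
  apply (rule exI[of _ "{C. circuit E r C \<and> C \<subseteq> D}"])
  by blast

lemma cyclic_E: "cyclic E r D \<Longrightarrow> D \<subseteq> E" using cyclic_iff circuit_E by blast

lemma cyclic_Un: "cyclic E r X \<Longrightarrow> cyclic E r Y \<Longrightarrow> cyclic E r (X \<union> Y)"
  unfolding cyclic_iff by blast

lemma circ_rank: assumes "circuit E r Z" "x \<in> Z" shows "r Z \<le> r (Z - {x})"
proof -
  have ZE: "Z \<subseteq> E" using assms circuit_E by blast
  have fin: "finite Z" using ZE finite_sub by blast
  have "Z - {x} \<subset> Z" using assms by blast
  then have "indep E r (Z - {x})" using assms unfolding circuit_def by blast
  then have "r (Z - {x}) = card Z - 1" using fin assms(2) unfolding indep_def by simp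
  moreover have "r Z < card Z" using assms(1) rcard[OF ZE] ZE unfolding circuit_def indep_def by auto
  ultimately show ?thesis by linarith
qed

lemma incirc_rank: assumes "circuit E r Z" "Z \<subseteq> D" "x \<in> Z" "D \<subseteq> E" shows "r (D - {x}) = r D"
proof -
  have "r ((D - {x}) \<union> Z) + r ((D - {x}) \<inter> Z) \<le> r (D - {x}) + r Z"
    using assms circuit_E by (intro submod) auto
  moreover have "(D - {x}) \<union> Z = D" "(D - {x}) \<inter> Z = Z - {x}" using assms by auto
  ultimately have "r D + r (Z - {x}) \<le> r (D - {x}) + r Z" by simp
  moreover note circ_rank[OF assms(1,3)]
  moreover have "r (D - {x}) \<le> r D" using assms by (intro rmono) auto
  ultimately show ?thesis by linarith
qed

lemma incirc_nul: assumes "circuit E r Z" "Z \<subseteq> D" "x \<in> Z" "D \<subseteq> E" shows "nul (D - {x}) = nul D - 1"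
proof -
  have "finite D" using assms finite_sub by blast
  then have "card (D - {x}) + 1 = card D" using assms card_Suc_Diff1[of D x] by auto
  then show ?thesis using incirc_rank[OF assms] unfolding nul_def by linarith
qed

lemma null_strict: assumes "cyclic E r D" "X \<subseteq> D" "X \<noteq> D" shows "nul X < nul D"
proof -
  obtain x where x: "x \<in> D" "x \<notin> X" using assms by blast
  have "\<forall>x\<in>D. \<exists>C. circuit E r C \<and> C \<subseteq> D \<and> x \<in> C" using assms(1) cyclic_iff by blast
  then obtain Z where Z: "circuit E r Z" "Z \<subseteq> D" "x \<in> Z" using x by blast
  have DE: "D \<subseteq> E" using assms(1) cyclic_E by blast
  have "nul X \<le> nul (D - {x})" using assms x DE by (intro nullity_mono) auto
  moreover have "nul (D - {x}) = nul D - 1" using incirc_nul Z DE by blast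
  ultimately show ?thesis by linarith
qed

lemma coloop_rank: assumes "X \<subseteq> E" "e \<in> X" "\<not>(\<exists>Z. circuit E r Z \<and> Z \<subseteq> X \<and> e \<in> Z)"
  shows "r X = r (X - {e}) + 1"
proof -
  obtain B where B: "B \<subseteq> X - {e}" "indep E r B" "card B = r (X - {e})"
    using basis_ext[OF indep_empty, of "X - {e}"] assms by auto
  have iE: "insert e B \<subseteq> E" using assms B by auto
  have "indep E r (insert e B)"
  proof (rule ccontr)
    assume "\<not> indep E r (insert e B)"
    then obtain C where C: "C \<subseteq> insert e B" "circuit E r C" using dep_circuit[OF iE] by blast
    show False
    proof (cases "e \<in> C")
      case True
      have "C \<subseteq> X" using C(1) B(1) assms(2) by blast
      then show False using assms(3) C(2) True by blast
    next
      case False then have "C \<subseteq> B" using C by blast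
      then have "indep E r C" using indep_subset B by blast
      then show False using C unfolding circuit_def by blast
    qed
  qed
  moreover have "finite B" using B assms finite_sub by blast
  moreover have "e \<notin> B" using B by blast
  ultimately have "r (insert e B) = card B + 1" unfolding indep_def by simp
  moreover have "r (insert e B) \<le> r X" using B assms by (intro rmono) auto
  moreover have "r X \<le> r (X - {e}) + card (X - (X - {e}))" using assms by (intro r_diff) auto
  moreover have "X - (X - {e}) = {e}" using assms by auto
  ultimately show ?thesis using B by simp
qed

lemma coloop_nul: assumes "X \<subseteq> E" "e \<in> X" "\<not>(\<exists>Z. circuit E r Z \<and> Z \<subseteq> X \<and> e \<in> Z)"
  shows "nul (X - {e}) = nul X"
proof -
  have "finite X" using assms finite_sub by blast
  then have "card (X - {e}) + 1 = card X" using assms card_Suc_Diff1[of X e] by auto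
  then show ?thesis using coloop_rank[OF assms] unfolding nul_def by linarith
qed

lemma kfold_nul: "kfold_circuit E r k X \<longleftrightarrow> cyclic E r X \<and> nul X = int k"
proof -
  have "r X + k = card X \<longleftrightarrow> int (card X) - int (r X) = int k" by linarith
  then show ?thesis unfolding kfold_circuit_def nul_def by simp
qed

end



locale pc = matr + fixes D1 D2 e assumes pc: "parallel_connection_restr E r D1 D2 e"
begin

lemma D1E: "D1 \<subseteq> E" and D2E: "D2 \<subseteq> E" and Int: "D1 \<inter> D2 = {e}"
  using pc unfolding parallel_connection_restr_def by auto
lemma eD1: "e \<in> D1" and eD2: "e \<in> D2" using Int by auto
lemma IntD: "x \<in> D1 \<Longrightarrow> x \<in> D2 \<Longrightarrow> x = e" using Int by auto

lemma circ_eq: "{C. restr_circuit E r (D1 \<union> D2) C} =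
         {C. restr_circuit E r D1 C} \<union> {C. restr_circuit E r D2 C}
         \<union> {(C1 \<union> C2) - {e} | C1 C2.
               restr_circuit E r D1 C1 \<and> e \<in> C1 \<and> restr_circuit E r D2 C2 \<and> e \<in> C2}"
  using pc unfolding parallel_connection_restr_def by blast

lemma mix_sym: "{(C1 \<union> C2) - {e} | C1 C2. P C1 \<and> Q C2} = {(C1 \<union> C2) - {e} | C1 C2. Q C1 \<and> P C2}"
  by (auto simp: Un_commute)

lemma pc_sym: "pc E r D2 D1 e"
proof -
  have "{C. restr_circuit E r (D2 \<union> D1) C} =
         {C. restr_circuit E r D2 C} \<union> {C. restr_circuit E r D1 C}
         \<union> {(C1 \<union> C2) - {e} | C1 C2.
               restr_circuit E r D2 C1 \<and> e \<in> C1 \<and> restr_circuit E r D1 C2 \<and> e \<in> C2}"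
    using circ_eq mix_sym[of "\<lambda>C. restr_circuit E r D1 C \<and> e \<in> C" "\<lambda>C. restr_circuit E r D2 C \<and> e \<in> C"]
    by (simp add: Un_commute Un_left_commute Un_assoc)
  moreover have "D2 \<inter> D1 = {e}" using Int by (simp add: Int_commute)
  ultimately show ?thesis using pc mat unfolding pc_def pc_axioms_def matr_def parallel_connection_restr_def
    by (simp only:) blast
qed

lemma circ_cases: assumes "circuit E r Z" "Z \<subseteq> D1 \<union> D2"
  obtains "Z \<subseteq> D1" | "Z \<subseteq> D2"
  | Z1 Z2 where "circuit E r Z1" "Z1 \<subseteq> D1" "e \<in> Z1" "circuit E r Z2" "Z2 \<subseteq> D2" "e \<in> Z2"
      "Z = (Z1 \<union> Z2) - {e}"
proof -
  have "Z \<in> {C. restr_circuit E r (D1 \<union> D2) C}" using assms unfolding restr_circuit_def by blast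
  from this[unfolded circ_eq] show ?thesis using that unfolding restr_circuit_def by blast
qed

lemma circ_mixed: assumes "circuit E r Z1" "Z1 \<subseteq> D1" "e \<in> Z1" "circuit E r Z2" "Z2 \<subseteq> D2" "e \<in> Z2"
  shows "circuit E r ((Z1 \<union> Z2) - {e})"
proof -
  have "(Z1 \<union> Z2) - {e} \<in> {C. restr_circuit E r (D1 \<union> D2) C}"
    unfolding circ_eq unfolding restr_circuit_def using assms by blast
  then show ?thesis by (simp add: restr_circuit_def)
qed

lemma r_e: "r {e} = 1"
proof -
  have "\<not> circuit E r {e}" using pc eD1 unfolding parallel_connection_restr_def is_loop_restr_def restr_circuit_def
    by blast
  moreover have "\<forall>Y. Y \<subset> {e} \<longrightarrow> indep E r Y"
  proof (intro allI impI)
    fix Y assume "Y \<subset> {e}" then have "Y = {}" by blast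
    then show "indep E r Y" using indep_empty by simp
  qed
  moreover have "{e} \<subseteq> E" using eD1 D1E by blast
  ultimately have "indep E r {e}" unfolding circuit_def by blast
  then show ?thesis unfolding indep_def by simp
qed

lemma e_circ1: "\<exists>Z. circuit E r Z \<and> Z \<subseteq> D1 \<and> e \<in> Z"
proof -
  have "\<not> is_coloop_restr E r D1 e" using pc unfolding parallel_connection_restr_def by blast
  then have "\<exists>C. restr_circuit E r D1 C \<and> e \<in> C" using eD1 unfolding is_coloop_restr_def by blast
  then show ?thesis unfolding restr_circuit_def by blast
qed
lemma e_circ2: "\<exists>Z. circuit E r Z \<and> Z \<subseteq> D2 \<and> e \<in> Z"
proof -
  have "\<not> is_coloop_restr E r D2 e" using pc unfolding parallel_connection_restr_def by blast
  then have "\<exists>C. restr_circuit E r D2 C \<and> e \<in> C" using eD2 unfolding is_coloop_restr_def by blast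
  then show ?thesis unfolding restr_circuit_def by blast
qed

lemma rank_R: assumes X: "e \<in> X1" "X1 \<subseteq> D1" "e \<in> X2" "X2 \<subseteq> D2"
  shows "r (X1 \<union> X2) + 1 = r X1 + r X2"
proof -
  have X1E: "X1 \<subseteq> E" using X D1E by blast
  have X2E: "X2 \<subseteq> E" using X D2E by blast
  have I: "X1 \<inter> X2 = {e}" using X IntD by blast
  have "r (X1 \<union> X2) + r (X1 \<inter> X2) \<le> r X1 + r X2" using submod[OF X1E X2E] .
  hence up: "r (X1 \<union> X2) + 1 \<le> r X1 + r X2" using I r_e by simp
  have eE: "{e} \<subseteq> E" using eD1 D1E by blast
  have ie: "indep E r {e}" unfolding indep_def using eE r_e by simp
  obtain B1 where B1: "{e} \<subseteq> B1" "B1 \<subseteq> X1" "indep E r B1" "card B1 = r X1"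
    using basis_ext[OF ie, of X1] X X1E by auto
  obtain B2 where B2: "{e} \<subseteq> B2" "B2 \<subseteq> X2" "indep E r B2" "card B2 = r X2"
    using basis_ext[OF ie, of X2] X X2E by auto
  have B2D1: "B2 \<inter> D1 \<subseteq> B1"
  proof
    fix x assume x: "x \<in> B2 \<inter> D1"
    then have "x \<in> D2" using B2(2) X(4) by blast
    then have "x = e" using x IntD by blast
    then show "x \<in> B1" using B1(1) by simp
  qed
  have B1D2: "B1 \<inter> D2 \<subseteq> B2"
  proof
    fix x assume x: "x \<in> B1 \<inter> D2"
    then have "x \<in> D1" using B1(2) X(2) by blast
    then have "x = e" using x IntD by blast
    then show "x \<in> B2" using B2(1) by simp
  qed
  have ind: "indep E r (B1 \<union> B2)"
  proof (rule ccontr)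
    assume "\<not> indep E r (B1 \<union> B2)"
    moreover have "B1 \<union> B2 \<subseteq> E" using B1 B2 X1E X2E by blast
    ultimately obtain C where C: "C \<subseteq> B1 \<union> B2" "circuit E r C" using dep_circuit by meson
    have CD: "C \<subseteq> D1 \<union> D2" using C B1 B2 X by blast
    show False
    proof (rule circ_cases[OF C(2) CD])
      assume "C \<subseteq> D1"
      then have "C \<subseteq> B1" using C B2D1 by blast
      then have "indep E r C" using indep_subset B1 by blast
      then show False using C unfolding circuit_def by blast
    next
      assume "C \<subseteq> D2"
      then have "C \<subseteq> B2" using C B1D2 by blast
      then have "indep E r C" using indep_subset B2 by blast
      then show False using C unfolding circuit_def by blast
    next
      fix Z1 Z2 assume Z: "circuit E r Z1" "Z1 \<subseteq> D1" "e \<in> Z1" "circuit E r Z2" "Z2 \<subseteq> D2" "e \<in> Z2"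
        "C = (Z1 \<union> Z2) - {e}"
      have "Z1 - {e} \<subseteq> C" using Z(7) by blast
      then have "Z1 - {e} \<subseteq> (B1 \<union> B2) \<inter> D1" using C(1) Z(2) by blast
      then have "Z1 - {e} \<subseteq> B1" using B2D1 by blast
      then have "Z1 \<subseteq> B1" using B1(1) by blast
      then have "indep E r Z1" using indep_subset B1 by blast
      then show False using Z unfolding circuit_def by blast
    qed
  qed
  have fin: "finite B1" "finite B2" using B1 B2 X1E X2E finite_sub by auto
  have "B1 \<inter> B2 \<subseteq> D1 \<inter> D2" using B1(2) B2(2) X(2,4) by blast
  then have "B1 \<inter> B2 = {e}" using B1(1) B2(1) IntD by blast
  then have "card (B1 \<union> B2) + 1 = card B1 + card B2" using card_Un_Int[of B1 B2] fin by simp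
  moreover have "r (B1 \<union> B2) = card (B1 \<union> B2)" using ind unfolding indep_def by simp
  moreover have "r (B1 \<union> B2) \<le> r (X1 \<union> X2)" using B1 B2 X1E X2E by (intro rmono) auto
  ultimately show ?thesis using up B1 B2 by linarith
qed

lemma nul_R: assumes X: "e \<in> X1" "X1 \<subseteq> D1" "e \<in> X2" "X2 \<subseteq> D2"
  shows "nul (X1 \<union> X2) = nul X1 + nul X2"
proof -
  have fin: "finite X1" "finite X2" using X D1E D2E finite_sub by auto
  have "X1 \<inter> X2 = {e}" using X IntD by blast
  then have "card (X1 \<union> X2) + 1 = card X1 + card X2" using card_Un_Int[of X1 X2] fin by simp
  then show ?thesis using rank_R[OF X] unfolding nul_def by linarith
qed

lemma cyc_part1: assumes "cyclic E r C" "C \<subseteq> D1 \<union> D2" "e \<in> C" "x \<in> C" "x \<in> D1" "x \<noteq> e"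
  shows "\<exists>Z. circuit E r Z \<and> Z \<subseteq> C \<inter> D1 \<and> x \<in> Z"
proof -
  have "\<forall>x\<in>C. \<exists>Z. circuit E r Z \<and> Z \<subseteq> C \<and> x \<in> Z" using assms(1) cyclic_iff by blast
  then obtain Z where Z: "circuit E r Z" "Z \<subseteq> C" "x \<in> Z" using assms by blast
  have ZD: "Z \<subseteq> D1 \<union> D2" using Z assms by blast
  show ?thesis
  proof (rule circ_cases[OF Z(1) ZD])
    assume "Z \<subseteq> D1" then show ?thesis using Z by blast
  next
    assume "Z \<subseteq> D2" then have "x \<in> D1 \<inter> D2" using Z assms by blast
    then show ?thesis using IntD assms by blast
  next
    fix Z1 Z2 assume Zs: "circuit E r Z1" "Z1 \<subseteq> D1" "e \<in> Z1" "circuit E r Z2" "Z2 \<subseteq> D2" "e \<in> Z2"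
        "Z = (Z1 \<union> Z2) - {e}"
    have "x \<in> Z1" using Zs Z assms IntD by blast
    moreover have "Z1 \<subseteq> C \<inter> D1" using Zs Z assms by blast
    ultimately show ?thesis using Zs by blast
  qed
qed

lemma cyc_part_e: assumes "cyclic E r C" "C \<subseteq> D1 \<union> D2" "e \<in> C"
  shows "(\<exists>Z. circuit E r Z \<and> Z \<subseteq> C \<inter> D1 \<and> e \<in> Z) \<or> (\<exists>Z. circuit E r Z \<and> Z \<subseteq> C \<inter> D2 \<and> e \<in> Z)"
proof -
  have "\<forall>x\<in>C. \<exists>Z. circuit E r Z \<and> Z \<subseteq> C \<and> x \<in> Z" using assms(1) cyclic_iff by blast
  then obtain Z where Z: "circuit E r Z" "Z \<subseteq> C" "e \<in> Z" using assms by blast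
  have ZD: "Z \<subseteq> D1 \<union> D2" using Z assms by blast
  show ?thesis
  proof (rule circ_cases[OF Z(1) ZD])
    assume "Z \<subseteq> D1" then show ?thesis using Z by blast
  next
    assume "Z \<subseteq> D2" then show ?thesis using Z by blast
  next
    fix Z1 Z2 assume Zs: "circuit E r Z1" "Z1 \<subseteq> D1" "e \<in> Z1" "circuit E r Z2" "Z2 \<subseteq> D2" "e \<in> Z2"
        "Z = (Z1 \<union> Z2) - {e}"
    then show ?thesis using Z by blast
  qed
qed

lemma cyc_D_minus_e: assumes "cyclic E r D1" "cyclic E r D2" shows "cyclic E r ((D1 \<union> D2) - {e})"
  unfolding cyclic_iff
proof
  fix x assume x: "x \<in> (D1 \<union> D2) - {e}"
  have c1: "\<forall>x\<in>D1. \<exists>Z. circuit E r Z \<and> Z \<subseteq> D1 \<and> x \<in> Z" using assms(1) cyclic_iff by blast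
  have c2: "\<forall>x\<in>D2. \<exists>Z. circuit E r Z \<and> Z \<subseteq> D2 \<and> x \<in> Z" using assms(2) cyclic_iff by blast
  obtain W1 where W1: "circuit E r W1" "W1 \<subseteq> D1" "e \<in> W1" using e_circ1 by blast
  obtain W2 where W2: "circuit E r W2" "W2 \<subseteq> D2" "e \<in> W2" using e_circ2 by blast
  show "\<exists>C. circuit E r C \<and> C \<subseteq> D1 \<union> D2 - {e} \<and> x \<in> C"
  proof (cases "x \<in> D1")
    case True
    then obtain Z where Z: "circuit E r Z" "Z \<subseteq> D1" "x \<in> Z" using c1 by blast
    show ?thesis
    proof (cases "e \<in> Z")
      case True
      have "circuit E r ((Z \<union> W2) - {e})" using circ_mixed[OF Z(1,2) True W2] .
      then show ?thesis using Z W2 x by blast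
    next
      case False then show ?thesis using Z by blast
    qed
  next
    case False
    then have "x \<in> D2" using x by blast
    then obtain Z where Z: "circuit E r Z" "Z \<subseteq> D2" "x \<in> Z" using c2 by blast
    show ?thesis
    proof (cases "e \<in> Z")
      case True
      have "circuit E r ((W1 \<union> Z) - {e})" using circ_mixed[OF W1 Z(1,2) True] .
      then show ?thesis using Z W1 x by blast
    next
      case False then show ?thesis using Z by blast
    qed
  qed
qed

lemma cyc_iff_parts: "cyclic E r (D1 \<union> D2) \<longleftrightarrow> cyclic E r D1 \<and> cyclic E r D2"
proof
  assume L: "cyclic E r (D1 \<union> D2)"
  interpret s: pc E r D2 D1 e by (rule pc_sym)
  have "\<forall>x\<in>D1. \<exists>Z. circuit E r Z \<and> Z \<subseteq> D1 \<and> x \<in> Z"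
  proof
    fix x assume x: "x \<in> D1"
    show "\<exists>Z. circuit E r Z \<and> Z \<subseteq> D1 \<and> x \<in> Z"
    proof (cases "x = e")
      case True then show ?thesis using e_circ1 by blast
    next
      case False
      then show ?thesis using cyc_part1[OF L _ _ _ x False] eD1 x by blast
    qed
  qed
  moreover have "\<forall>x\<in>D2. \<exists>Z. circuit E r Z \<and> Z \<subseteq> D2 \<and> x \<in> Z"
  proof
    fix x assume x: "x \<in> D2"
    have L': "cyclic E r (D2 \<union> D1)" using L by (simp add: Un_commute)
    show "\<exists>Z. circuit E r Z \<and> Z \<subseteq> D2 \<and> x \<in> Z"
    proof (cases "x = e")
      case True then show ?thesis using e_circ2 by blast
    next
      case False
      then show ?thesis using s.cyc_part1[OF L' _ _ _ x False] eD2 x by blast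
    qed
  qed
  ultimately show "cyclic E r D1 \<and> cyclic E r D2" using cyclic_iff by blast
next
  assume "cyclic E r D1 \<and> cyclic E r D2" then show "cyclic E r (D1 \<union> D2)" using cyclic_Un by blast
qed

lemma part_a: "kfold_circuit E r k (D1 \<union> D2) \<longleftrightarrow>
   (\<exists>k1 k2. kfold_circuit E r k1 D1 \<and> kfold_circuit E r k2 D2 \<and> k = k1 + k2)"
proof -
  have R: "r (D1 \<union> D2) + 1 = r D1 + r D2" using rank_R eD1 eD2 by blast
  have fin: "finite D1" "finite D2" using D1E D2E finite_sub by auto
  have "card (D1 \<union> D2) + 1 = card D1 + card D2" using card_Un_Int[of D1 D2] fin Int by simp
  moreover have "r D1 \<le> card D1" "r D2 \<le> card D2" using rcard D1E D2E by auto
  ultimately show ?thesis unfolding kfold_circuit_def cyc_iff_parts using R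
    apply (intro iffI)
     apply (rule exI[of _ "card D1 - r D1"], rule exI[of _ "card D2 - r D2"])
     apply arith
    apply arith
    done
qed

end


locale pp = pc + fixes k1 k2 :: nat and P1 P2 :: "'a set set" and A1 A2 :: "'a set"
  assumes k1: "kfold_circuit E r k1 D1" and k2: "kfold_circuit E r k2 D2"
  and pp1: "principal_partition E r D1 P1" and pp2: "principal_partition E r D2 P2"
  and eA1: "e \<in> A1" and A1: "A1 \<in> P1" and eA2: "e \<in> A2" and A2: "A2 \<in> P2"
begin

lemma pp_sym: "pp E r D2 D1 e k2 k1 P2 P1 A2 A1"
  unfolding pp_def pp_axioms_def using pc_sym k1 k2 pp1 pp2 eA1 A1 eA2 A2 by blast

lemma P1f: "k1 \<ge> 1 \<and> partition_on D1 P1 \<and>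
  (\<lambda>A. D1 - A) ` P1 = {C. C \<subseteq> D1 \<and> kfold_circuit E r (k1 - 1) C}"
proof -
  obtain k where k: "k \<ge> 1" "kfold_circuit E r k D1" "partition_on D1 P1"
    "(\<lambda>A. D1 - A) ` P1 = {C. C \<subseteq> D1 \<and> kfold_circuit E r (k - 1) C}"
    using pp1 unfolding principal_partition_def by blast
  have "k = k1" using k(2) k1 unfolding kfold_circuit_def by simp
  then show ?thesis using k by simp
qed

lemma k1pos: "k1 \<ge> 1" using P1f by blast
lemma part1: "partition_on D1 P1" using P1f by blast
lemma img1: "(\<lambda>A. D1 - A) ` P1 = {C. C \<subseteq> D1 \<and> kfold_circuit E r (k1 - 1) C}" using P1f by blast

lemma disj1: "A \<in> P1 \<Longrightarrow> A' \<in> P1 \<Longrightarrow> A \<noteq> A' \<Longrightarrow> A \<inter> A' = {}"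
  using part1 unfolding partition_on_def pairwise_def disjnt_def by blast
lemma sub1: "A \<in> P1 \<Longrightarrow> A \<subseteq> D1"
  using part1 unfolding partition_on_def by blast
lemma ne1: "A \<in> P1 \<Longrightarrow> A \<noteq> {}"
  using part1 unfolding partition_on_def by blast
lemma eA_eq: "A \<in> P1 \<Longrightarrow> e \<in> A \<Longrightarrow> A = A1"
  using disj1[of A A1] A1 eA1 by blast
lemma cov1: "x \<in> D1 \<Longrightarrow> \<exists>A\<in>P1. x \<in> A"
  using part1 unfolding partition_on_def by blast

lemma cyc1: "cyclic E r D1" using k1 unfolding kfold_circuit_def by blast
lemma nul1: "nul D1 = int k1" using k1 kfold_nul by blast
lemma cyc2: "cyclic E r D2" using k2 unfolding kfold_circuit_def by blast
lemma nul2: "nul D2 = int k2" using k2 kfold_nul by blast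

lemma sub_kfold1: assumes "A \<in> P1" shows "cyclic E r (D1 - A)" "nul (D1 - A) = int k1 - 1"
proof -
  have "D1 - A \<in> (\<lambda>A. D1 - A) ` P1" using assms by blast
  then have "kfold_circuit E r (k1 - 1) (D1 - A)" unfolding img1 by blast
  then show "cyclic E r (D1 - A)" "nul (D1 - A) = int k1 - 1" using kfold_nul k1pos by auto
qed

lemma from_img1: assumes "X \<subseteq> D1" "cyclic E r X" "nul X = int k1 - 1"
  obtains A where "A \<in> P1" "X = D1 - A"
proof -
  have "kfold_circuit E r (k1 - 1) X" using assms kfold_nul k1pos by auto
  then have "X \<in> (\<lambda>A. D1 - A) ` P1" unfolding img1 using assms by blast
  then show ?thesis using that by blast
qed

lemma ed1: assumes A: "A \<in> P1" "A \<noteq> A1"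
  shows "kfold_circuit E r (k1 + k2 - 1) ((D1 \<union> D2) - A)"
proof -
  have eA: "e \<notin> A" using disj1[OF A(1) A1] A(2) eA1 by blast
  have AD: "A \<subseteq> D1" using sub1 A by blast
  have "A \<inter> D2 = {}"
  proof (rule ccontr)
    assume "A \<inter> D2 \<noteq> {}"
    then obtain x where "x \<in> A" "x \<in> D2" by blast
    then have "x = e" using AD IntD by blast
    then show False using eA \<open>x \<in> A\<close> by simp
  qed
  then have eq: "(D1 \<union> D2) - A = (D1 - A) \<union> D2" by blast
  have c: "cyclic E r (D1 - A)" "nul (D1 - A) = int k1 - 1" using sub_kfold1 A by auto
  have "nul ((D1 - A) \<union> D2) = nul (D1 - A) + nul D2"
    using eD1 eA eD2 by (intro nul_R) auto
  moreover have "cyclic E r ((D1 - A) \<union> D2)" using c cyclic_Un cyc2 by blast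
  ultimately show ?thesis unfolding eq kfold_nul using c nul2 k1pos by simp
qed

lemma ed2: assumes ne: "A1 - {e} \<noteq> {}"
  shows "kfold_circuit E r (k1 + k2 - 1) ((D1 \<union> D2) - (A1 - {e}))"
proof -
  define X1 where "X1 = insert e (D1 - A1)"
  have c: "cyclic E r (D1 - A1)" "nul (D1 - A1) = int k1 - 1" using sub_kfold1 A1 by auto
  have X1D: "X1 \<subseteq> D1" unfolding X1_def using eD1 by blast
  obtain a where a: "a \<in> A1" "a \<noteq> e" using ne by blast
  have "a \<in> D1" using sub1[OF A1] a by blast
  then have "X1 \<noteq> D1" unfolding X1_def using a by blast
  then have "nul X1 < nul D1" using null_strict cyc1 X1D by blast
  moreover have "nul (D1 - A1) \<le> nul X1" unfolding X1_def using D1E eD1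
    by (intro nullity_mono) auto
  ultimately have nX1: "nul X1 = int k1 - 1" using c nul1 by linarith
  have AD2: "A1 \<inter> D2 \<subseteq> {e}"
  proof
    fix x assume "x \<in> A1 \<inter> D2"
    then have "x \<in> D1" "x \<in> D2" using sub1[OF A1] by blast+
    then show "x \<in> {e}" using IntD by blast
  qed
  have eq: "(D1 \<union> D2) - (A1 - {e}) = X1 \<union> D2" unfolding X1_def using AD2 eD2 by blast
  have eq2: "X1 \<union> D2 = (D1 - A1) \<union> D2" unfolding X1_def using eD2 by blast
  have "nul (X1 \<union> D2) = nul X1 + nul D2"
    using eD2 X1D by (intro nul_R) (auto simp: X1_def)
  moreover have "cyclic E r (X1 \<union> D2)" unfolding eq2 using c cyclic_Un cyc2 by blast
  ultimately show ?thesis unfolding eq kfold_nul using nX1 nul2 k1pos by simp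
qed

lemma ed3: "kfold_circuit E r (k1 + k2 - 1) ((D1 \<union> D2) - {e})"
proof -
  obtain Z where Z: "circuit E r Z" "Z \<subseteq> D1" "e \<in> Z" using e_circ1 by blast
  have "nul ((D1 \<union> D2) - {e}) = nul (D1 \<union> D2) - 1"
    using Z D1E D2E by (intro incirc_nul[of Z]) auto
  moreover have "nul (D1 \<union> D2) = nul D1 + nul D2" using eD1 eD2 by (intro nul_R) auto
  moreover have "cyclic E r ((D1 \<union> D2) - {e})" using cyc_D_minus_e cyc1 cyc2 by blast
  ultimately show ?thesis unfolding kfold_nul using nul1 nul2 k1pos by simp
qed


lemma hd1: assumes C: "C \<subseteq> D1 \<union> D2" "cyclic E r C" "e \<in> C" "D1 \<subseteq> C"
    "nul (C \<inter> D2) = int k2 - 1" "C \<noteq> D1 \<union> D2"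
  shows "\<exists>A. (A \<in> P2 - {A2} \<or> A = A2 - {e}) \<and> A \<noteq> {} \<and> C = (D1 \<union> D2) - A"
proof -
  interpret s: pp E r D2 D1 e k2 k1 P2 P1 A2 A1 by (rule pp_sym)
  define C2 where "C2 = C \<inter> D2"
  have C2D: "C2 \<subseteq> D2" unfolding C2_def by blast
  have C2E: "C2 \<subseteq> E" using C2D D2E by blast
  have eC2: "e \<in> C2" unfolding C2_def using C eD2 by blast
  have CC: "C = D1 \<union> C2" unfolding C2_def using C(1,4) by blast
  have C': "C \<subseteq> D2 \<union> D1" using C(1) by blast
  have other: "\<exists>Z. circuit E r Z \<and> Z \<subseteq> C2 \<and> x \<in> Z" if "x \<in> C2" "x \<noteq> e" for x
    using s.cyc_part1[OF C(2) C' C(3), of x] that unfolding C2_def by blast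
  have nC2: "nul C2 = int k2 - 1" using C(5) unfolding C2_def .
  show ?thesis
  proof (cases "\<exists>Z. circuit E r Z \<and> Z \<subseteq> C2 \<and> e \<in> Z")
    case True
    have "cyclic E r C2" unfolding cyclic_iff
    proof
      fix x assume "x \<in> C2"
      then show "\<exists>Z. circuit E r Z \<and> Z \<subseteq> C2 \<and> x \<in> Z" using True other by (cases "x = e") auto
    qed
    then obtain A where A: "A \<in> P2" "C2 = D2 - A" using s.from_img1 C2D nC2 by blast
    have eA: "e \<notin> A" using A eC2 by blast
    have "A \<noteq> A2" using eA eA2 by blast
    moreover have "A \<noteq> {}" using s.ne1 A by blast
    moreover have "A \<inter> D1 = {}"
    proof (rule ccontr)
      assume "A \<inter> D1 \<noteq> {}"
      then obtain x where "x \<in> A" "x \<in> D1" by blast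
      moreover have "A \<subseteq> D2" using s.sub1 A by blast
      ultimately have "x = e" using IntD by blast
      then show False using eA \<open>x \<in> A\<close> by simp
    qed
    then have "C = (D1 \<union> D2) - A" using CC A by blast
    ultimately show ?thesis using A by blast
  next
    case False
    define C2' where "C2' = C2 - {e}"
    have nC2': "nul C2' = int k2 - 1" unfolding C2'_def using coloop_nul[OF C2E eC2 False] nC2 by simp
    have "cyclic E r C2'" unfolding cyclic_iff
    proof
      fix x assume x: "x \<in> C2'"
      then obtain Z where Z: "circuit E r Z" "Z \<subseteq> C2" "x \<in> Z" using other unfolding C2'_def by blast
      have "e \<notin> Z" using False Z by blast
      then show "\<exists>Z. circuit E r Z \<and> Z \<subseteq> C2' \<and> x \<in> Z" using Z unfolding C2'_def by blast
    qed
    moreover have "C2' \<subseteq> D2" using C2D unfolding C2'_def by blast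
    ultimately obtain A where A: "A \<in> P2" "C2' = D2 - A" using s.from_img1 nC2' by blast
    have "e \<in> A" using A eD2 unfolding C2'_def by blast
    then have AA: "A = A2" using s.eA_eq A by blast
    have AD1: "A2 \<inter> D1 \<subseteq> {e}"
    proof
      fix x assume "x \<in> A2 \<inter> D1"
      then have "x \<in> D1" "x \<in> D2" using s.sub1[OF A2] by blast+
      then show "x \<in> {e}" using IntD by blast
    qed
    have C2eq: "C2 = (D2 - A2) \<union> {e}" using A AA eC2 unfolding C2'_def by blast
    have Ceq: "C = (D1 \<union> D2) - (A2 - {e})" using CC C2eq AD1 eD1 by blast
    have "A2 - {e} \<noteq> {}"
    proof
      assume h: "A2 - {e} = {}"
      have "C = D1 \<union> D2" using Ceq unfolding h by simp
      then show False using C(6) by simp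
    qed
    then show ?thesis using Ceq by blast
  qed
qed

lemma hard: assumes C: "C \<subseteq> D1 \<union> D2" "kfold_circuit E r (k1 + k2 - 1) C"
  shows "\<exists>A \<in> ((P1 - {A1}) \<union> (P2 - {A2}) \<union> {A1 - {e}, A2 - {e}, {e}}) - {{}}. C = (D1 \<union> D2) - A"
proof -
  interpret s: pp E r D2 D1 e k2 k1 P2 P1 A2 A1 by (rule pp_sym)
  have cC: "cyclic E r C" and nC: "nul C = int k1 + int k2 - 1" using C(2) k1pos unfolding kfold_nul by auto
  have nD: "nul (D1 \<union> D2) = int k1 + int k2" using nul_R[OF eD1 _ eD2] nul1 nul2 by simp
  show ?thesis
  proof (cases "e \<in> C")
    case False
    then have sub: "C \<subseteq> (D1 \<union> D2) - {e}" using C by blast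
    have "cyclic E r ((D1 \<union> D2) - {e})" "nul ((D1 \<union> D2) - {e}) = int k1 + int k2 - 1"
      using ed3 k1pos unfolding kfold_nul by auto
    then have "C = (D1 \<union> D2) - {e}" using null_strict[of "(D1 \<union> D2) - {e}" C] sub nC by fastforce
    then show ?thesis by blast
  next
    case True
    have CC: "C = (C \<inter> D1) \<union> (C \<inter> D2)" using C(1) by blast
    have n12: "nul C = nul (C \<inter> D1) + nul (C \<inter> D2)"
      using nul_R[of "C \<inter> D1" "C \<inter> D2"] True CC eD1 eD2 by simp
    have le1: "nul (C \<inter> D1) \<le> int k1" using nullity_mono[of "C \<inter> D1" D1] D1E nul1 by simp
    have le2: "nul (C \<inter> D2) \<le> int k2" using nullity_mono[of "C \<inter> D2" D2] D2E nul2 by simp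
    have CD: "C \<noteq> D1 \<union> D2" using nC nD by auto
    show ?thesis
    proof (cases "nul (C \<inter> D1) = int k1")
      case True1: True
      have "C \<inter> D1 = D1" using null_strict[OF cyc1, of "C \<inter> D1"] True1 nul1 by fastforce
      then have h1: "D1 \<subseteq> C" by blast
      have h2: "nul (C \<inter> D2) = int k2 - 1" using n12 nC True1 by simp
      obtain A where "(A \<in> P2 - {A2} \<or> A = A2 - {e})" "A \<noteq> {}" "C = (D1 \<union> D2) - A"
        using hd1[OF C(1) cC True h1 h2 CD] by blast
      then show ?thesis by blast
    next
      case False1: False
      then have "nul (C \<inter> D2) = int k2" using n12 nC le1 le2 by linarith
      then have "C \<inter> D2 = D2" using null_strict[OF cyc2, of "C \<inter> D2"] nul2 by fastforce
      then have h1: "D2 \<subseteq> C" by blast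
      have h2: "nul (C \<inter> D1) = int k1 - 1" using n12 nC \<open>nul (C \<inter> D2) = int k2\<close> by simp
      have h3: "C \<subseteq> D2 \<union> D1" "C \<noteq> D2 \<union> D1" using C(1) CD by auto
      obtain A where "(A \<in> P1 - {A1} \<or> A = A1 - {e})" "A \<noteq> {}" "C = (D2 \<union> D1) - A"
        using s.hd1[OF h3(1) cC True h1 h2 h3(2)] by blast
      then show ?thesis by (auto simp: Un_commute)
    qed
  qed
qed


lemma classify: assumes "X \<in> ((P1 - {A1}) \<union> (P2 - {A2}) \<union> {A1 - {e}, A2 - {e}, {e}}) - {{}}"
  shows "X = {e} \<or> (\<exists>A\<in>P1. X = A - {e}) \<or> (\<exists>A\<in>P2. X = A - {e})"
proof -
  interpret s: pp E r D2 D1 e k2 k1 P2 P1 A2 A1 by (rule pp_sym)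
  have "X \<in> P1 - {A1} \<or> X \<in> P2 - {A2} \<or> X = A1 - {e} \<or> X = A2 - {e} \<or> X = {e}" using assms by blast
  then show ?thesis
  proof (elim disjE)
    assume X: "X \<in> P1 - {A1}"
    then have "e \<notin> X" using eA_eq by blast
    then have "X = X - {e}" by simp
    then show ?thesis using X by blast
  next
    assume X: "X \<in> P2 - {A2}"
    then have "e \<notin> X" using s.eA_eq by blast
    then have "X = X - {e}" by simp
    then show ?thesis using X by blast
  qed (use A1 A2 in blast)+
qed

lemma part: "partition_on (D1 \<union> D2) (((P1 - {A1}) \<union> (P2 - {A2}) \<union> {A1 - {e}, A2 - {e}, {e}}) - {{}})"
  (is "partition_on _ ?P")
proof -
  interpret s: pp E r D2 D1 e k2 k1 P2 P1 A2 A1 by (rule pp_sym)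
  have U1: "\<Union>?P \<subseteq> D1 \<union> D2"
  proof
    fix x assume "x \<in> \<Union>?P"
    then obtain X where X: "X \<in> ?P" "x \<in> X" by blast
    from classify[OF X(1)] show "x \<in> D1 \<union> D2"
      using X(2) eD1 sub1 s.sub1 by blast
  qed
  have U2: "D1 \<union> D2 \<subseteq> \<Union>?P"
  proof
    fix x assume x: "x \<in> D1 \<union> D2"
    show "x \<in> \<Union>?P"
    proof (cases "x = e")
      case True then show ?thesis by blast
    next
      case False
      show ?thesis
      proof (cases "x \<in> D1")
        case True
        then obtain A where A: "A \<in> P1" "x \<in> A" using cov1 by blast
        show ?thesis
        proof (cases "A = A1")
          case True then have "x \<in> A1 - {e}" using A False by blast
          then show ?thesis by blast
        next
          case F2: False then have "A \<in> ?P" using A by blast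
          then show ?thesis using A by blast
        qed
      next
        case F1: False
        then have "x \<in> D2" using x by blast
        then obtain A where A: "A \<in> P2" "x \<in> A" using s.cov1 by blast
        show ?thesis
        proof (cases "A = A2")
          case True then have "x \<in> A2 - {e}" using A False by blast
          then show ?thesis by blast
        next
          case F2: False then have "A \<in> ?P" using A by blast
          then show ?thesis using A by blast
        qed
      qed
    qed
  qed
  have d11: "(A - {e}) \<inter> (A' - {e}) = {}" if "A \<in> P1" "A' \<in> P1" "A - {e} \<noteq> A' - {e}" for A A'
  proof -
    have "A \<noteq> A'" using that by blast
    then show ?thesis using disj1 that by blast
  qed
  have d22: "(A - {e}) \<inter> (A' - {e}) = {}" if "A \<in> P2" "A' \<in> P2" "A - {e} \<noteq> A' - {e}" for A A'
  proof -
    have "A \<noteq> A'" using that by blast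
    then show ?thesis using s.disj1 that by blast
  qed
  have d12: "(A - {e}) \<inter> (A' - {e}) = {}" if "A \<in> P1" "A' \<in> P2" for A A'
  proof (rule ccontr)
    assume "(A - {e}) \<inter> (A' - {e}) \<noteq> {}"
    then obtain x where x: "x \<in> A" "x \<in> A'" "x \<noteq> e" by blast
    have "x \<in> D1" using sub1 that x by blast
    moreover have "x \<in> D2" using s.sub1 that x by blast
    ultimately show False using IntD x by blast
  qed
  have disj: "X \<inter> Y = {}" if "X \<in> ?P" "Y \<in> ?P" "X \<noteq> Y" for X Y
  proof -
    from classify[OF that(1)] classify[OF that(2)] show ?thesis
    proof (elim disjE bexE)
      assume "X = {e}" "Y = {e}" then show ?thesis using that by simp
    next
      fix A assume "X = {e}" "A \<in> P1" "Y = A - {e}" then show ?thesis by blast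
    next
      fix A assume "X = {e}" "A \<in> P2" "Y = A - {e}" then show ?thesis by blast
    next
      fix A assume "X = A - {e}" "A \<in> P1" "Y = {e}" then show ?thesis by blast
    next
      fix A assume "X = A - {e}" "A \<in> P2" "Y = {e}" then show ?thesis by blast
    next
      fix A A' assume "X = A - {e}" "A \<in> P1" "Y = A' - {e}" "A' \<in> P1"
      then show ?thesis using d11 that(3) by blast
    next
      fix A A' assume "X = A - {e}" "A \<in> P2" "Y = A' - {e}" "A' \<in> P2"
      then show ?thesis using d22 that(3) by blast
    next
      fix A A' assume "X = A - {e}" "A \<in> P1" "Y = A' - {e}" "A' \<in> P2"
      then show ?thesis using d12 by blast
    next
      fix A A' assume "X = A - {e}" "A \<in> P2" "Y = A' - {e}" "A' \<in> P1"
      then show ?thesis using d12 by blast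
    qed
  qed
  have h1: "\<Union>?P = D1 \<union> D2" using U1 U2 by (rule equalityI)
  have h2: "{} \<notin> ?P" by blast
  have h3: "pairwise disjnt ?P" unfolding pairwise_def disjnt_def using disj by blast
  show ?thesis unfolding partition_on_def using h1 h2 h3 by (intro conjI)
qed

lemma main_b: "principal_partition E r (D1 \<union> D2) (((P1 - {A1}) \<union> (P2 - {A2}) \<union> {A1 - {e}, A2 - {e}, {e}}) - {{}})"
  (is "principal_partition _ _ _ ?P")
proof -
  interpret s: pp E r D2 D1 e k2 k1 P2 P1 A2 A1 by (rule pp_sym)
  have kk: "kfold_circuit E r (k1 + k2) (D1 \<union> D2)" using part_a k1 k2 by blast
  have img: "(\<lambda>A. (D1 \<union> D2) - A) ` ?P = {C. C \<subseteq> D1 \<union> D2 \<and> kfold_circuit E r (k1 + k2 - 1) C}"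
  proof
    show "(\<lambda>A. (D1 \<union> D2) - A) ` ?P \<subseteq> {C. C \<subseteq> D1 \<union> D2 \<and> kfold_circuit E r (k1 + k2 - 1) C}"
    proof
      fix X assume "X \<in> (\<lambda>A. (D1 \<union> D2) - A) ` ?P"
      then obtain A where A: "A \<in> ?P" "X = (D1 \<union> D2) - A" by blast
      have "A \<in> P1 - {A1} \<or> A \<in> P2 - {A2} \<or> (A = A1 - {e} \<and> A \<noteq> {}) \<or> (A = A2 - {e} \<and> A \<noteq> {}) \<or> A = {e}"
        using A(1) by blast
      then have "kfold_circuit E r (k1 + k2 - 1) ((D1 \<union> D2) - A)"
      proof (elim disjE conjE)
        assume "A \<in> P1 - {A1}" then show ?thesis using ed1 by blast
      next
        assume "A \<in> P2 - {A2}"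
        then have "kfold_circuit E r (k2 + k1 - 1) ((D2 \<union> D1) - A)" using s.ed1 by blast
        then show ?thesis by (simp add: Un_commute add.commute)
      next
        assume "A = A1 - {e}" "A \<noteq> {}" then show ?thesis using ed2 by blast
      next
        assume "A = A2 - {e}" "A \<noteq> {}"
        then have "kfold_circuit E r (k2 + k1 - 1) ((D2 \<union> D1) - A)" using s.ed2 by blast
        then show ?thesis by (simp add: Un_commute add.commute)
      next
        assume "A = {e}" then show ?thesis using ed3 by blast
      qed
      then show "X \<in> {C. C \<subseteq> D1 \<union> D2 \<and> kfold_circuit E r (k1 + k2 - 1) C}" using A(2) by blast
    qed
  next
    show "{C. C \<subseteq> D1 \<union> D2 \<and> kfold_circuit E r (k1 + k2 - 1) C} \<subseteq> (\<lambda>A. (D1 \<union> D2) - A) ` ?P"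
    proof
      fix C assume "C \<in> {C. C \<subseteq> D1 \<union> D2 \<and> kfold_circuit E r (k1 + k2 - 1) C}"
      then have hC: "C \<subseteq> D1 \<union> D2" "kfold_circuit E r (k1 + k2 - 1) C" by auto
      from hard[OF hC] obtain A where "A \<in> ?P" "C = (D1 \<union> D2) - A" by blast
      then show "C \<in> (\<lambda>A. (D1 \<union> D2) - A) ` ?P" by blast
    qed
  qed
  have "k1 + k2 \<ge> 1" using k1pos by simp
  then show ?thesis unfolding principal_partition_def using kk part img by blast
qed

end

theorem proposition2p17:
  fixes E :: "'a set" and r :: "'a set \<Rightarrow> nat" and D D1 D2 :: "'a set" and e :: 'a
  assumes "matroid E r"
    and "D1 \<inter> D2 = {e}"
    and "D = D1 \<union> D2"
    and "parallel_connection_restr E r D1 D2 e"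
  shows "(\<forall>k. kfold_circuit E r k D \<longleftrightarrow>
            (\<exists>k1 k2. kfold_circuit E r k1 D1 \<and> kfold_circuit E r k2 D2 \<and> k = k1 + k2))
    \<and> (\<forall>k1 k2 P1 P2 A1 A2.
          kfold_circuit E r k1 D1 \<and> kfold_circuit E r k2 D2
          \<and> principal_partition E r D1 P1 \<and> principal_partition E r D2 P2
          \<and> e \<in> A1 \<and> A1 \<in> P1 \<and> e \<in> A2 \<and> A2 \<in> P2
          \<longrightarrow> principal_partition E r D
                (((P1 - {A1}) \<union> (P2 - {A2}) \<union> {A1 - {e}, A2 - {e}, {e}}) - {{}}))"
proof -
  have hpc: "pc E r D1 D2 e" using assms(1,4) unfolding pc_def pc_axioms_def matr_def by blast
  interpret pc E r D1 D2 e by (rule hpc)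
  have a: "\<forall>k. kfold_circuit E r k D \<longleftrightarrow>
            (\<exists>k1 k2. kfold_circuit E r k1 D1 \<and> kfold_circuit E r k2 D2 \<and> k = k1 + k2)"
    using part_a assms(3) by simp
  have b: "\<forall>k1 k2 P1 P2 A1 A2.
          kfold_circuit E r k1 D1 \<and> kfold_circuit E r k2 D2
          \<and> principal_partition E r D1 P1 \<and> principal_partition E r D2 P2
          \<and> e \<in> A1 \<and> A1 \<in> P1 \<and> e \<in> A2 \<and> A2 \<in> P2
          \<longrightarrow> principal_partition E r D
                (((P1 - {A1}) \<union> (P2 - {A2}) \<union> {A1 - {e}, A2 - {e}, {e}}) - {{}})"
  proof (intro allI impI)
    fix k1 k2 P1 P2 A1 A2
    assume h: "kfold_circuit E r k1 D1 \<and> kfold_circuit E r k2 D2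
          \<and> principal_partition E r D1 P1 \<and> principal_partition E r D2 P2
          \<and> e \<in> A1 \<and> A1 \<in> P1 \<and> e \<in> A2 \<and> A2 \<in> P2"
    have "pp E r D1 D2 e k1 k2 P1 P2 A1 A2" using hpc h unfolding pp_def pp_axioms_def by blast
    then interpret q: pp E r D1 D2 e k1 k2 P1 P2 A1 A2 .
    show "principal_partition E r D
                (((P1 - {A1}) \<union> (P2 - {A2}) \<union> {A1 - {e}, A2 - {e}, {e}}) - {{}})"
      using q.main_b assms(3) by simp
  qed
  show ?thesis using a b by blast
qed

end
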